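(* Let $D$ be an integral domain with quotient field $K$, $n\ge1$, and $C\in M_n(D)$. Then $$\{f(C)\mid f\in \mathrm{Int}_K(M_n(D))\}=D[C],$$ where $D[C]=\{f(C)\mid f\in D[x]\}$.
   Context: $M_n(D)$ is the ring of $n\times n$ matrices over $D$; $\mathrm{Int}_K(M_n(D))=\{f\in K[x]\mid f(C)\in M_n(D)\text{ for all }C\in M_n(D)\}$, with $f(C)$ computed in $M_n(K)$. *)

theory Defs
  imports "HOL-Analysis.Analysis" "HOL-Computational_Algebra.Polynomial_Factorial"
begin

text \<open>Square matrices over a commutative ring are modelled as 'a^'n^'n (n = CARD('n) \<ge> 1).
  Powers use the matrix product **, and f(C) = sum of coeff f i * C^i.\<close>

primrec mat_pow :: "('a::comm_ring_1)^('n::finite)^'n \<Rightarrow> nat \<Rightarrow> 'a^'n^'n" where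
  "mat_pow A 0 = mat 1"
| "mat_pow A (Suc k) = A ** mat_pow A k"

definition mat_smult :: "'a::comm_ring_1 \<Rightarrow> 'a^('n::finite)^'n \<Rightarrow> 'a^'n^'n" where
  "mat_smult c A = (\<chi> i j. c * A $ i $ j)"

definition poly_mat :: "'a::comm_ring_1 poly \<Rightarrow> 'a^('n::finite)^'n \<Rightarrow> 'a^'n^'n" where
  "poly_mat p A = (\<Sum>i\<le>degree p. mat_smult (coeff p i) (mat_pow A i))"

text \<open>Entrywise image of a matrix over D in M_n(K), K = 'a fract the quotient field.\<close>
definition mat_to_fract :: "('a::idom)^('n::finite)^'n \<Rightarrow> 'a fract^'n^'n" where
  "mat_to_fract A = (\<chi> i j. to_fract (A $ i $ j))"

definition Int_mat :: "('n::finite) itself \<Rightarrow> 'a::idom fract poly set" where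
  "Int_mat (_::'n itself) = {f. \<forall>C::'a^'n^'n. \<exists>M::'a^'n^'n. poly_mat f (mat_to_fract C) = mat_to_fract M}"

end

theory Submission
  imports Defs "Jordan_Normal_Form.Char_Poly"
begin

no_notation Matrix.vec_index (infixl "$" 100)

abbreviation cI :: "'a::comm_ring_1^('n::finite)^'n" where
  "cI \<equiv> Finite_Cartesian_Product.mat 1"

lemma cmat_eqI: assumes "\<And>i j. A $ i $ j = B $ i $ j" shows "A = (B::'a^'n^'m)"
  by (simp add: Finite_Cartesian_Product.vec_eq_iff assms)

lemma cmul_0_right[simp]: "(A::'a::comm_ring_1^'n::finite^'n) ** 0 = 0"
  by (rule cmat_eqI) (simp add: matrix_matrix_mult_def)
lemma cmul_0_left[simp]: "0 ** (A::'a::comm_ring_1^'n::finite^'n) = 0"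
  by (rule cmat_eqI) (simp add: matrix_matrix_mult_def)

lemma cmul_add_right: "((A::'a::comm_ring_1^'n::finite^'n) + B) ** C = A ** C + B ** C"
  by (rule cmat_eqI) (simp add: matrix_matrix_mult_def sum.distrib distrib_right)

lemma cmul_diff_left: "(A::'a::comm_ring_1^'n::finite^'n) ** (B - C) = A ** B - A ** C"
  by (rule cmat_eqI) (simp add: matrix_matrix_mult_def sum_subtractf right_diff_distrib)

lemma cmul_sum_left: "finite S \<Longrightarrow> (A::'a::comm_ring_1^'n::finite^'n) ** (\<Sum>i\<in>S. F i) = (\<Sum>i\<in>S. A ** F i)"
  by (induction S rule: finite_induct) (auto simp: matrix_add_ldistrib)

lemma smult_0[simp]: "mat_smult 0 A = 0"
  by (rule cmat_eqI) (simp add: mat_smult_def)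
lemma smult_1[simp]: "mat_smult 1 A = A"
  by (rule cmat_eqI) (simp add: mat_smult_def)
lemma smult_0_right[simp]: "mat_smult a 0 = 0"
  by (rule cmat_eqI) (simp add: mat_smult_def)
lemma smult_add_left: "mat_smult (a + b) A = mat_smult a A + mat_smult b A"
  by (rule cmat_eqI) (simp add: mat_smult_def distrib_right)
lemma smult_add_right: "mat_smult a (A + B) = mat_smult a A + mat_smult a B"
  by (rule cmat_eqI) (simp add: mat_smult_def distrib_left)
lemma smult_smult: "mat_smult a (mat_smult b A) = mat_smult (a * b) A"
  by (rule cmat_eqI) (simp add: mat_smult_def mult.assoc)
lemma smult_sum: "finite S \<Longrightarrow> mat_smult a (\<Sum>i\<in>S. F i) = (\<Sum>i\<in>S. mat_smult a (F i))"
  by (induction S rule: finite_induct) (auto simp: smult_add_right)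
lemma smult_mul_right: "mat_smult c (A ** (B::'a::comm_ring_1^'n::finite^'n)) = A ** mat_smult c B"
  by (rule cmat_eqI) (simp add: mat_smult_def matrix_matrix_mult_def sum_distrib_left algebra_simps)
lemma smult_mul_left: "mat_smult c ((A::'a::comm_ring_1^'n::finite^'n) ** B) = mat_smult c A ** B"
  by (rule cmat_eqI) (simp add: mat_smult_def matrix_matrix_mult_def sum_distrib_left algebra_simps)
lemma smult_I_mul: "mat_smult c cI ** (B::'a::comm_ring_1^'n::finite^'n) = mat_smult c B"
  by (metis matrix_mul_lid smult_mul_left)
lemma smult_eq_mul_I: "mat_smult c (B::'a::comm_ring_1^'n::finite^'n) = B ** mat_smult c cI"
  by (metis matrix_mul_rid smult_mul_right)

lemma mat_pow_Suc': "mat_pow A (Suc k) = mat_pow A k ** A"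
  by (induction k) (simp_all add: matrix_mul_assoc)

lemma poly_mat_ext:
  assumes "degree p < N"
  shows "poly_mat p A = (\<Sum>i<N. mat_smult (coeff p i) (mat_pow A i))"
  unfolding poly_mat_def
  by (rule sum.mono_neutral_left) (use assms in \<open>auto simp: coeff_eq_0\<close>)

lemma poly_mat_0[simp]: "poly_mat 0 A = 0"
  by (simp add: poly_mat_def)

lemma poly_mat_pCons: "poly_mat (pCons a p) A = mat_smult a cI + A ** poly_mat p A"
proof -
  define N where "N = Suc (degree p)"
  have dN: "degree p < N" unfolding N_def by simp
  have d1: "degree (pCons a p) < Suc N" using degree_pCons_le[of a p] unfolding N_def by linarith
  have "poly_mat (pCons a p) A = (\<Sum>i<Suc N. mat_smult (coeff (pCons a p) i) (mat_pow A i))"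
    by (rule poly_mat_ext[OF d1])
  also have "\<dots> = mat_smult a cI + (\<Sum>i<N. mat_smult (coeff p i) (A ** mat_pow A i))"
    by (subst sum.lessThan_Suc_shift) simp
  also have "(\<Sum>i<N. mat_smult (coeff p i) (A ** mat_pow A i)) = A ** poly_mat p A"
    by (simp add: poly_mat_ext[OF dN] cmul_sum_left smult_mul_right)
  finally show ?thesis .
qed

lemma poly_mat_add: "poly_mat (p + q) A = poly_mat p A + poly_mat q A"
proof -
  define N where "N = Suc (max (degree p) (degree q))"
  have "degree (p+q) < N" using degree_add_le_max[of p q] unfolding N_def by linarith
  then show ?thesis
    by (simp add: poly_mat_ext[of _ N] N_def smult_add_left sum.distrib)
qed

lemma poly_mat_smult: "poly_mat (Polynomial.smult a p) A = mat_smult a (poly_mat p A)"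
proof -
  define N where "N = Suc (degree p)"
  have d: "degree (Polynomial.smult a p) < N" using degree_smult_le[of a p] unfolding N_def by linarith
  have "poly_mat (Polynomial.smult a p) A = (\<Sum>i<N. mat_smult (a * coeff p i) (mat_pow A i))"
    by (simp add: poly_mat_ext[OF d])
  also have "\<dots> = mat_smult a (\<Sum>i<N. mat_smult (coeff p i) (mat_pow A i))"
    by (simp add: smult_sum smult_smult)
  also have "\<dots> = mat_smult a (poly_mat p A)"
    by (subst poly_mat_ext[of p N]) (simp_all add: N_def)
  finally show ?thesis .
qed

lemma poly_mat_mult: "poly_mat (p * q) A = poly_mat p A ** poly_mat q A"
proof (induction p rule: pCons_induct)
  case 0 then show ?case by simp
next
  case (pCons a p)
  have "poly_mat (pCons a p * q) A = poly_mat (Polynomial.smult a q + pCons 0 (p * q)) A" by simp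
  also have "\<dots> = mat_smult a (poly_mat q A) + A ** (poly_mat p A ** poly_mat q A)"
    by (simp add: poly_mat_add poly_mat_smult poly_mat_pCons pCons.IH)
  also have "\<dots> = poly_mat (pCons a p) A ** poly_mat q A"
    by (simp add: poly_mat_pCons cmul_add_right smult_I_mul matrix_mul_assoc)
  finally show ?case .
qed

lemma CH_entry:
  fixes C :: "'a::comm_ring_1^'n::finite^'n"
  shows "\<exists>cp (g::'n \<Rightarrow> nat) Adj. degree cp = CARD('n) \<and> coeff cp CARD('n) = 1 \<and> inj g \<and>
     (\<forall>x y. (\<Sum>z\<in>UNIV. ((if x = z then [:0,1:] else 0) + [:- C $ x $ z:]) * Adj (g z) (g y))
       = (if x = y then cp else 0))"
proof -
  define n where "n = CARD('n)"
  obtain h where hb: "bij_betw h {0..<n} (UNIV::'n set)"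
    using ex_bij_betw_nat_finite[of "UNIV::'n set"] n_def by auto
  define g where "g = inv_into {0..<n} h"
  have gb: "bij_betw g UNIV {0..<n}" using bij_betw_inv_into[OF hb] g_def by simp
  have hg: "h (g x) = x" for x using bij_betw_inv_into_right[OF hb, of x] g_def by simp
  have gl: "g x < n" for x using gb by (auto simp: bij_betw_def)
  define A where "A = Matrix.mat n n (\<lambda>(i,j). C $ h i $ h j)"
  have Ac: "A \<in> carrier_mat n n" by (simp add: A_def)
  define cp where "cp = char_poly A"
  have dm: "degree cp = n \<and> coeff cp n = 1" using degree_monic_char_poly[OF Ac] cp_def by simp
  define PM where "PM = char_poly_matrix A"
  define Adj where "Adj = adj_mat PM"
  have PMc: "PM \<in> carrier_mat n n" using Ac PM_def by simp
  have Adjc: "Adj \<in> carrier_mat n n" using adj_mat(1)[OF PMc] Adj_def by simp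
  have eq: "PM * Adj = cp \<cdot>\<^sub>m 1\<^sub>m n" using adj_mat(2)[OF PMc] unfolding cp_def char_poly_def PM_def Adj_def by simp
  have PMe: "PM $$ (i,l) = (if i = l then [:0,1:] else 0) + [:- A $$ (i,l):]" if "i<n" "l<n" for i l
    using that Ac by (simp add: PM_def char_poly_matrix_def)
  have E: "(\<Sum>l\<in>{0..<n}. PM $$ (i,l) * Adj $$ (l,j)) = (if i = j then cp else 0)" if "i<n" "j<n" for i j
  proof -
    have "(PM * Adj) $$ (i,j) = (\<Sum>l\<in>{0..<n}. PM $$ (i,l) * Adj $$ (l,j))"
      using that PMc Adjc by (simp add: scalar_prod_def)
    also have "(PM * Adj) $$ (i,j) = (if i = j then cp else 0)"
      using that eq by simp
    finally show ?thesis by simp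
  qed
  have "(\<Sum>z\<in>UNIV. ((if x = z then [:0,1:] else 0) + [:- C $ x $ z:]) * Adj $$ (g z, g y))
       = (if x = y then cp else 0)" for x y
  proof -
    have "(\<Sum>z\<in>UNIV. ((if x = z then [:0,1:] else 0) + [:- C $ x $ z:]) * Adj $$ (g z, g y))
        = (\<Sum>z\<in>UNIV. PM $$ (g x, g z) * Adj $$ (g z, g y))"
    proof (rule sum.cong[OF refl])
      fix z
      have "g x = g z \<longleftrightarrow> x = z" by (metis hg)
      then show "((if x = z then [:0,1:] else 0) + [:- C $ x $ z:]) * Adj $$ (g z, g y) = PM $$ (g x, g z) * Adj $$ (g z, g y)"
        using gl[of x] gl[of z] by (simp add: PMe A_def hg)
    qed
    also have "\<dots> = (\<Sum>l\<in>{0..<n}. PM $$ (g x, l) * Adj $$ (l, g y))"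
      by (rule sum.reindex_bij_betw[OF gb])
    also have "\<dots> = (if g x = g y then cp else 0)" by (rule E[OF gl gl])
    also have "\<dots> = (if x = y then cp else 0)" by (metis hg)
    finally show ?thesis .
  qed
  moreover have "inj g" using gb by (simp add: bij_betw_def)
  ultimately show ?thesis using dm n_def
    by (intro exI[of _ cp] exI[of _ g] exI[of _ "\<lambda>i j. Adj $$ (i,j)"]) auto
qed

lemma CH:
  fixes C :: "'a::comm_ring_1^'n::finite^'n"
  shows "\<exists>cp. degree cp = CARD('n) \<and> coeff cp CARD('n) = 1 \<and> poly_mat cp C = 0"
proof -
  obtain cp and g :: "'n \<Rightarrow> nat" and Adj where d: "degree cp = CARD('n)" "coeff cp CARD('n) = 1"
    and E: "\<And>x y. (\<Sum>z\<in>UNIV. ((if x = z then [:0,1:] else 0) + [:- C $ x $ z:]) * Adj (g z) (g y))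
       = (if x = y then cp else 0)"
    using CH_entry[of C] by blast
  define b where "b k = (\<chi> x y. coeff (Adj (g x) (g y)) k)" for k
  define bp where "bp k = (case k of 0 \<Rightarrow> 0 | Suc k' \<Rightarrow> b k')" for k
  have key: "mat_smult (coeff cp k) cI = bp k - C ** b k" for k
  proof (rule cmat_eqI)
    fix x y
    let ?P = "\<lambda>z. Adj (g z) (g y)"
    have s1: "(\<Sum>z\<in>UNIV. ((if x = z then [:0,1:] else 0) + [:- C $ x $ z:]) * ?P z)
      = pCons 0 (?P x) + (\<Sum>z\<in>UNIV. Polynomial.smult (- C$x$z) (?P z))"
    proof -
      have "(\<Sum>z\<in>UNIV. ((if x = z then [:0,1:] else 0) + [:- C $ x $ z:]) * ?P z)
        = (\<Sum>z\<in>UNIV. (if x = z then [:0,1:] else 0) * ?P z) + (\<Sum>z\<in>UNIV. [:- C $ x $ z:] * ?P z)"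
        by (simp only: distrib_right sum.distrib)
      also have "(\<Sum>z\<in>UNIV. (if x = z then [:0,1:] else 0) * ?P z) = (\<Sum>z\<in>UNIV. if x = z then pCons 0 (?P z) else 0)"
        by (rule sum.cong) auto
      also have "\<dots> = pCons 0 (?P x)" by simp
      also have "(\<Sum>z\<in>UNIV. [:- C $ x $ z:] * ?P z) = (\<Sum>z\<in>UNIV. Polynomial.smult (- C$x$z) (?P z))"
        by simp
      finally show ?thesis .
    qed
    have "coeff (if x = y then cp else 0) k = coeff (pCons 0 (?P x)) k - (\<Sum>z\<in>UNIV. C$x$z * coeff (?P z) k)"
      unfolding E[symmetric] s1 by (simp add: coeff_sum sum_negf)
    then show "mat_smult (coeff cp k) cI $ x $ y = (bp k - C ** b k) $ x $ y"
      by (cases k; cases "x = y") (auto simp: mat_smult_def Finite_Cartesian_Product.mat_def bp_def b_def matrix_matrix_mult_def)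
  qed
  define T where "T k = mat_pow C k ** bp k" for k
  have step: "mat_smult (coeff cp k) (mat_pow C k) = T k - T (Suc k)" for k
  proof -
    have "mat_smult (coeff cp k) (mat_pow C k) = mat_pow C k ** (bp k - C ** b k)"
      by (simp add: smult_eq_mul_I[of _ "mat_pow C k"] key)
    also have "\<dots> = T k - (mat_pow C k ** C) ** b k"
      by (simp add: cmul_diff_left matrix_mul_assoc T_def)
    also have "(mat_pow C k ** C) ** b k = T (Suc k)"
      by (simp add: T_def bp_def mat_pow_Suc'[symmetric] del: mat_pow.simps)
    finally show ?thesis .
  qed
  define dd where "dd = Suc (degree cp + (\<Sum>x\<in>UNIV. \<Sum>y\<in>UNIV. degree (Adj (g x) (g y))))"
  have bd: "b dd = 0"
  proof (rule cmat_eqI)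
    fix x y
    have "degree (Adj (g x) (g y)) \<le> (\<Sum>y\<in>UNIV. degree (Adj (g x) (g y)))"
      by (rule member_le_sum) auto
    also have "\<dots> \<le> (\<Sum>x\<in>UNIV. \<Sum>y\<in>UNIV. degree (Adj (g x) (g y)))"
      by (rule member_le_sum[where f = "\<lambda>x. \<Sum>y\<in>UNIV. degree (Adj (g x) (g y))"]) auto
    finally have "degree (Adj (g x) (g y)) < dd" unfolding dd_def by linarith
    then show "b dd $ x $ y = 0 $ x $ y" by (simp add: b_def coeff_eq_0)
  qed
  have dl: "degree cp < Suc dd" unfolding dd_def by simp
  have "poly_mat cp C = (\<Sum>k<Suc dd. mat_smult (coeff cp k) (mat_pow C k))"
    by (rule poly_mat_ext[OF dl])
  also have "\<dots> = (\<Sum>k<Suc dd. T k - T (Suc k))" by (simp only: step)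
  also have "\<dots> = T 0 - T (Suc dd)" by (rule sum_lessThan_telescope')
  also have "\<dots> = 0" by (simp add: T_def bp_def bd del: mat_pow.simps)
  finally show ?thesis using d by blast
qed

lemma index_bij: "\<exists>g::'n::finite \<Rightarrow> nat. bij_betw g UNIV {..<CARD('n)}"
proof -
  obtain h where hb: "bij_betw h {0..<CARD('n)} (UNIV::'n set)"
    using ex_bij_betw_nat_finite[of "UNIV::'n set"] by auto
  show ?thesis using bij_betw_inv_into[OF hb] by (auto simp: atLeast0LessThan)
qed

lemma mat_to_fract_mul: "mat_to_fract (A ** B) = mat_to_fract A ** mat_to_fract B"
  by (rule cmat_eqI) (simp add: mat_to_fract_def matrix_matrix_mult_def to_fract_sum to_fract_mult)
lemma mat_to_fract_I: "mat_to_fract (cI::'a::idom^'n::finite^'n) = cI"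
  by (rule cmat_eqI) (simp add: mat_to_fract_def Finite_Cartesian_Product.mat_def)
lemma mat_to_fract_0[simp]: "mat_to_fract 0 = 0"
  by (rule cmat_eqI) (simp add: mat_to_fract_def)
lemma mat_to_fract_add: "mat_to_fract (A + B) = mat_to_fract A + mat_to_fract B"
  by (rule cmat_eqI) (simp add: mat_to_fract_def to_fract_add)
lemma mat_to_fract_sum: "finite S \<Longrightarrow> mat_to_fract (\<Sum>i\<in>S. F i) = (\<Sum>i\<in>S. mat_to_fract (F i))"
  by (induction S rule: finite_induct) (auto simp: mat_to_fract_add)
lemma mat_to_fract_smult: "mat_to_fract (mat_smult c A) = mat_smult (to_fract c) (mat_to_fract A)"
  by (rule cmat_eqI) (simp add: mat_to_fract_def mat_smult_def to_fract_mult)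
lemma mat_to_fract_pow: "mat_to_fract (mat_pow A k) = mat_pow (mat_to_fract A) k"
  by (induction k) (simp_all add: mat_to_fract_I mat_to_fract_mul)

lemma poly_mat_to_fract:
  "poly_mat (map_poly to_fract p) (mat_to_fract A) = mat_to_fract (poly_mat p A)"
proof -
  define N where "N = Suc (degree p)"
  have d1: "degree (map_poly to_fract p) < N" using degree_map_poly_le[of to_fract p] N_def by simp
  have d2: "degree p < N" using N_def by simp
  show ?thesis
    by (simp add: poly_mat_ext[OF d1] poly_mat_ext[OF d2] mat_to_fract_sum mat_to_fract_smult
        mat_to_fract_pow coeff_map_poly del: mat_pow.simps)
qed

definition vec_to_fract :: "'a::idom^'n::finite \<Rightarrow> 'a fract^'n" where
  "vec_to_fract v = (\<chi> i. to_fract (v $ i))"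

lemma mat_to_fract_mulv: "mat_to_fract A *v vec_to_fract v = vec_to_fract (A *v v)"
  by (simp add: Finite_Cartesian_Product.vec_eq_iff mat_to_fract_def vec_to_fract_def
      matrix_vector_mult_def to_fract_sum to_fract_mult)

lemma sum_mulv: "finite S \<Longrightarrow> (\<Sum>i\<in>S. F i) *v (v::'a::comm_ring_1^'n::finite) = (\<Sum>i\<in>S. F i *v v)"
  by (induction S rule: finite_induct) (auto simp: matrix_vector_mult_add_rdistrib)

lemma smult_mulv: "mat_smult c A *v (v::'a::comm_ring_1^'n::finite) = c *s (A *v v)"
  by (simp add: Finite_Cartesian_Product.vec_eq_iff mat_smult_def matrix_vector_mult_def sum_distrib_left mult.assoc)

lemma poly_mat_mulv:
  assumes "degree p < N"
  shows "poly_mat p A *v v = (\<Sum>k<N. coeff p k *s (mat_pow A k *v v))"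
  by (simp add: poly_mat_ext[OF assms] sum_mulv smult_mulv del: mat_pow.simps)

lemma companion:
  fixes cp :: "'a::comm_ring_1 poly"
  assumes dg: "degree cp = CARD('n::finite)" and mo: "coeff cp CARD('n) = 1"
  shows "\<exists>(Cm::'a^'n^'n) (g::'n\<Rightarrow>nat) (e::nat \<Rightarrow> 'a^'n). bij_betw g UNIV {..<CARD('n)} \<and>
    (\<forall>k x. e k $ x = (if g x = k then 1 else 0)) \<and> (\<forall>k<CARD('n). mat_pow Cm k *v e 0 = e k) \<and>
    poly_mat cp Cm *v e 0 = 0"
proof -
  define n where "n = CARD('n)"
  have n0: "n > 0" unfolding n_def by simp
  obtain g :: "'n \<Rightarrow> nat" where gb: "bij_betw g UNIV {..<n}" using index_bij n_def by auto
  have gl: "g x < n" for x using gb by (auto simp: bij_betw_def)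
  have ginj: "g x = g y \<longleftrightarrow> x = y" for x y using gb by (auto simp: bij_betw_def inj_on_def)
  have gs: "\<exists>x. g x = k" if "k < n" for k
  proof -
    have "k \<in> g ` UNIV" using gb that by (simp add: bij_betw_def)
    then show ?thesis by auto
  qed
  define Cm :: "'a^'n^'n" where
    "Cm = (\<chi> i j. if g i = Suc (g j) then 1 else if g j = n - 1 then - coeff cp (g i) else 0)"
  define e :: "nat \<Rightarrow> 'a^'n" where "e k = (\<chi> x. if g x = k then 1 else 0)" for k
  have col: "Cm *v e k = (\<chi> i. Cm $ i $ x)" if "g x = k" for k x
  proof -
    have gk: "\<And>j. g j = k \<longleftrightarrow> j = x" using that ginj by auto
    show ?thesis
      by (simp add: Finite_Cartesian_Product.vec_eq_iff matrix_vector_mult_def e_def gk if_distrib cong: if_cong)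
  qed
  have c1: "Cm *v e k = e (Suc k)" if "Suc k < n" for k
  proof -
    have "k < n" using that by simp
    then obtain x where x: "g x = k" using gs by blast
    have kn: "k \<noteq> n - Suc 0" using that by simp
    show ?thesis using x that kn unfolding col[OF x] by (simp add: Finite_Cartesian_Product.vec_eq_iff Cm_def e_def)
  qed
  have c2: "Cm *v e (n - 1) = (\<chi> i. - coeff cp (g i))"
  proof -
    obtain x where x: "g x = n - 1" using gs[of "n-1"] n0 by auto
    have "g i \<noteq> Suc (n - 1)" for i using gl[of i] n0 by simp
    then show ?thesis unfolding col[OF x] by (simp add: Finite_Cartesian_Product.vec_eq_iff Cm_def x)
  qed
  have W: "mat_pow Cm k *v e 0 = e k" if "k < n" for k
    using that
  proof (induction k)
    case 0 then show ?case by simp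
  next
    case (Suc k)
    then show ?case by (simp add: matrix_vector_mul_assoc[symmetric] c1)
  qed
  have Wn: "mat_pow Cm n *v e 0 = (\<chi> i. - coeff cp (g i))"
  proof -
    have "n = Suc (n - 1)" using n0 by simp
    then have "mat_pow Cm n *v e 0 = Cm *v (mat_pow Cm (n-1) *v e 0)"
      by (metis mat_pow.simps(2) matrix_vector_mul_assoc)
    also have "\<dots> = Cm *v e (n - 1)" using W[of "n-1"] n0 by simp
    finally show ?thesis using c2 by simp
  qed
  have "poly_mat cp Cm *v e 0 = (\<Sum>k<Suc n. coeff cp k *s (mat_pow Cm k *v e 0))"
    by (rule poly_mat_mulv) (simp add: dg n_def)
  also have "\<dots> = (\<Sum>k<n. coeff cp k *s e k) + (\<chi> i. - coeff cp (g i))"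
    using W Wn mo n_def by (simp del: mat_pow.simps)
  also have "\<dots> = 0"
  proof -
    have "(\<Sum>k<n. coeff cp k * (if g x = k then 1 else 0)) = coeff cp (g x)" for x
      using gl[of x] by (simp add: if_distrib cong: if_cong)
    then show ?thesis by (simp add: Finite_Cartesian_Product.vec_eq_iff e_def)
  qed
  finally show ?thesis using gb W e_def n_def by (intro exI[of _ Cm] exI[of _ g] exI[of _ e]) auto
qed

lemma coeff_to_fract_map: "coeff (map_poly to_fract p) k = to_fract (coeff p k)"
  by (simp add: coeff_map_poly)

lemma sub_direction:
  fixes C :: "('a::idom)^('n::finite)^'n"
  assumes fI: "f \<in> Int_mat TYPE('n)"
  shows "\<exists>g :: 'a poly. poly_mat f (mat_to_fract C) = mat_to_fract (poly_mat g C)"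
proof -
  define n where "n = CARD('n)"
  have n0: "n > 0" unfolding n_def by simp
  obtain cp :: "'a poly" where dg: "degree cp = n" and mo: "coeff cp n = 1" and ch: "poly_mat cp C = 0"
    using CH[of C] n_def by blast
  obtain Cm :: "'a^'n^'n" and g :: "'n \<Rightarrow> nat" and e where gb: "bij_betw g UNIV {..<n}"
    and e: "\<And>k x. e k $ x = (if g x = k then 1 else 0)"
    and W: "\<And>k. k < n \<Longrightarrow> mat_pow Cm k *v e 0 = e k"
    and cz: "poly_mat cp Cm *v e 0 = 0"
    using companion[OF dg[unfolded n_def] mo[unfolded n_def]] n_def by blast
  have gl: "g x < n" for x using gb by (auto simp: bij_betw_def)
  have ginj: "g x = g y \<longleftrightarrow> x = y" for x y using gb by (auto simp: bij_betw_def inj_on_def)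
  have gs: "\<exists>x. g x = k" if "k < n" for k
  proof -
    have "k \<in> g ` UNIV" using gb that by (simp add: bij_betw_def)
    then show ?thesis by auto
  qed
  define cK where "cK = map_poly to_fract cp"
  have cKd: "degree cK = n" using dg mo unfolding cK_def by (subst degree_map_poly) auto
  have cK0: "cK \<noteq> 0" using cKd mo cK_def by (auto simp: coeff_to_fract_map)
  define q where "q = f div cK"
  define r where "r = f mod cK"
  have fqr: "f = q * cK + r" unfolding q_def r_def by simp
  have rd: "degree r < n"
  proof (cases "r = 0")
    case True then show ?thesis using n0 by simp
  next
    case False then show ?thesis using degree_mod_less'[OF cK0] cKd r_def by auto
  qed
  obtain M where M: "poly_mat f (mat_to_fract Cm) = mat_to_fract M"
    using fI unfolding Int_mat_def by blast
  have zK: "poly_mat cK (mat_to_fract Cm) *v vec_to_fract (e 0) = 0"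
    unfolding cK_def poly_mat_to_fract mat_to_fract_mulv cz by (simp add: vec_to_fract_def Finite_Cartesian_Product.vec_eq_iff)
  have "vec_to_fract (M *v e 0) = poly_mat f (mat_to_fract Cm) *v vec_to_fract (e 0)"
    by (simp add: M mat_to_fract_mulv)
  also have "\<dots> = poly_mat r (mat_to_fract Cm) *v vec_to_fract (e 0)"
    by (subst fqr) (simp add: poly_mat_add poly_mat_mult matrix_vector_mult_add_rdistrib
         matrix_vector_mul_assoc[symmetric] zK)
  also have "\<dots> = (\<Sum>k<n. coeff r k *s (mat_pow (mat_to_fract Cm) k *v vec_to_fract (e 0)))"
    by (rule poly_mat_mulv[OF rd])
  also have "\<dots> = (\<Sum>k<n. coeff r k *s vec_to_fract (e k))"
    by (rule sum.cong[OF refl]) (simp add: mat_to_fract_pow[symmetric] mat_to_fract_mulv W)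
  finally have col: "vec_to_fract (M *v e 0) = (\<Sum>k<n. coeff r k *s vec_to_fract (e k))" .
  have cr: "coeff r (g x) = to_fract ((M *v e 0) $ x)" for x
  proof -
    have "to_fract ((M *v e 0) $ x) = (\<Sum>k<n. coeff r k * to_fract (e k $ x))"
      using arg_cong[OF col, of "\<lambda>v. v $ x"] by (simp add: vec_to_fract_def sum_component)
    also have "\<dots> = (\<Sum>k<n. if g x = k then coeff r k else 0)"
      by (rule sum.cong[OF refl]) (simp add: e)
    also have "\<dots> = coeff r (g x)" using gl[of x] by simp
    finally show ?thesis by simp
  qed
  define r0 where "r0 = (\<Sum>x\<in>UNIV. monom ((M *v e 0) $ x) (g x))"
  have "r = map_poly to_fract r0"
  proof (rule poly_eqI)
    fix k
    have c0: "coeff r0 k = (\<Sum>x\<in>UNIV. if g x = k then (M *v e 0) $ x else 0)"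
      unfolding r0_def by (simp add: coeff_sum coeff_monom eq_commute)
    show "coeff r k = coeff (map_poly to_fract r0) k"
    proof (cases "k < n")
      case True
      then obtain x0 where x0: "g x0 = k" using gs by blast
      have "coeff r0 k = (M *v e 0) $ x0"
        unfolding c0 using x0 ginj by (simp add: x0[symmetric] ginj cong: if_cong)
      then show ?thesis using cr[of x0] x0 by (simp add: coeff_to_fract_map)
    next
      case False
      then have "coeff r0 k = 0" unfolding c0 using gl by (auto intro!: sum.neutral)
      moreover have "coeff r k = 0" using False rd by (simp add: coeff_eq_0)
      ultimately show ?thesis by (simp add: coeff_to_fract_map)
    qed
  qed
  have "poly_mat f (mat_to_fract C) = poly_mat r (mat_to_fract C)"
  proof -
    have "poly_mat cK (mat_to_fract C) = 0" unfolding cK_def poly_mat_to_fract ch by simp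
    then show ?thesis by (subst fqr) (simp add: poly_mat_add poly_mat_mult)
  qed
  also have "\<dots> = mat_to_fract (poly_mat r0 C)" by (simp add: \<open>r = map_poly to_fract r0\<close> poly_mat_to_fract)
  finally show ?thesis by blast
qed

theorem mainTheorem3:
  fixes C :: "('a::idom)^('n::finite)^'n"
  shows "{poly_mat f (mat_to_fract C) | f. f \<in> Int_mat TYPE('n)}
         = mat_to_fract ` {poly_mat g C | g :: 'a poly. True}"
proof
  show "{poly_mat f (mat_to_fract C) | f. f \<in> Int_mat TYPE('n)} \<subseteq> mat_to_fract ` {poly_mat g C | g :: 'a poly. True}"
    using sub_direction[of _ C] by blast
next
  show "mat_to_fract ` {poly_mat g C | g :: 'a poly. True} \<subseteq> {poly_mat f (mat_to_fract C) | f. f \<in> Int_mat TYPE('n)}"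
  proof
    fix X assume "X \<in> mat_to_fract ` {poly_mat g C | g :: 'a poly. True}"
    then obtain g :: "'a poly" where X: "X = mat_to_fract (poly_mat g C)" by blast
    have "map_poly to_fract g \<in> Int_mat TYPE('n)"
      unfolding Int_mat_def using poly_mat_to_fract[of g] by blast
    moreover have "X = poly_mat (map_poly to_fract g) (mat_to_fract C)" by (simp add: X poly_mat_to_fract)
    ultimately show "X \<in> {poly_mat f (mat_to_fract C) | f. f \<in> Int_mat TYPE('n)}" by blast
  qed
qed

end
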